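(* Fix an integer $k\ge 3$ and let $n$ be sufficiently large (so that $p\le 1$ below). Let $\widetilde G$ be a random graph drawn from $\mathcal{G}(n,p)$ with $p=1000k^2/n$. Then with probability $1-2^{-\Omega(n)}$, $\widetilde G$ has at most $2000k^2 n$ edges and is $\varepsilon$-far from being $K_k$-minor free for $\varepsilon=1/(50k^2)$.
   Context: $\mathcal{G}(n,p)$: graph on $n$ labelled vertices where each of the $\binom n2$ possible edges is present independently with probability $p$. A graph $G$ with $m$ edges is $\varepsilon$-far from being $K_k$-minor free if more than $\varepsilon m$ edges must be removed from $G$ so that the complete graph $K_k$ is not a minor of the resulting graph (a minor is a graph isomorphic to one obtained from a subgraph by edge contractions). The $\Omega(\cdot)$ hides a constant depending only on $k$. *)

theory Defs
  imports Complex_Main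
begin

type_synonym 'a graph = "'a set \<times> 'a set set"

definition wf_graph :: "'a graph \<Rightarrow> bool" where
  "wf_graph G \<longleftrightarrow> finite (fst G) \<and>
     (\<forall>e\<in>snd G. \<exists>a b. a \<in> fst G \<and> b \<in> fst G \<and> a \<noteq> b \<and> e = {a, b})"

definition subgraph :: "'a graph \<Rightarrow> 'a graph \<Rightarrow> bool" where
  "subgraph H G \<longleftrightarrow> wf_graph H \<and> fst H \<subseteq> fst G \<and> snd H \<subseteq> snd G"

text \<open>Contraction of the edge {u,v}: vertex v is merged into u; loops and parallel
  edges are discarded (simple graph).\<close>
definition contract :: "'a graph \<Rightarrow> 'a \<Rightarrow> 'a \<Rightarrow> 'a graph" where
  "contract G u v =
     (fst G - {v},
      {e \<in> snd G. v \<notin> e} \<union> {{u, w} | w. {v, w} \<in> snd G \<and> w \<noteq> u})"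

inductive contracts_to :: "'a graph \<Rightarrow> 'a graph \<Rightarrow> bool" where
  refl: "contracts_to G G"
| step: "{u, v} \<in> snd G \<Longrightarrow> u \<noteq> v \<Longrightarrow> contracts_to (contract G u v) H \<Longrightarrow> contracts_to G H"

definition is_complete_graph :: "nat \<Rightarrow> 'a graph \<Rightarrow> bool" where
  "is_complete_graph k H \<longleftrightarrow> finite (fst H) \<and> card (fst H) = k \<and>
     snd H = {{a, b} | a b. a \<in> fst H \<and> b \<in> fst H \<and> a \<noteq> b}"

definition has_K_minor :: "nat \<Rightarrow> 'a graph \<Rightarrow> bool" where
  "has_K_minor k G \<longleftrightarrow> (\<exists>S H. subgraph S G \<and> contracts_to S H \<and> is_complete_graph k H)"

definition far_from_K_minor_free :: "real \<Rightarrow> nat \<Rightarrow> 'a graph \<Rightarrow> bool" where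
  "far_from_K_minor_free eps k G \<longleftrightarrow>
     (\<forall>F \<subseteq> snd G. \<not> has_K_minor k (fst G, snd G - F) \<longrightarrow>
        real (card F) > eps * real (card (snd G)))"

definition all_edges :: "nat \<Rightarrow> nat set set" where
  "all_edges n = {{a, b} | a b. a < n \<and> b < n \<and> a \<noteq> b}"

text \<open>Probability that G(n,p) (each of the n choose 2 edges present independently with
  probability p) satisfies property P.\<close>
definition gnp_prob :: "nat \<Rightarrow> real \<Rightarrow> (nat graph \<Rightarrow> bool) \<Rightarrow> real" where
  "gnp_prob n p P =
     (\<Sum>E \<in> {E. E \<subseteq> all_edges n \<and> P ({..<n}, E)}.
        p ^ card E * (1 - p) ^ (card (all_edges n) - card E))"

end

theory Submission
  imports Defs
begin

definition conn :: "'a set set \<Rightarrow> 'a set \<Rightarrow> bool" where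
  "conn E X \<longleftrightarrow> (\<forall>Y. Y \<subseteq> X \<longrightarrow> Y \<noteq> {} \<longrightarrow> Y \<noteq> X \<longrightarrow> (\<exists>u\<in>Y. \<exists>w\<in>X-Y. {u,w}\<in>E))"
lemma connD: "conn E X \<Longrightarrow> Y \<subseteq> X \<Longrightarrow> Y \<noteq> {} \<Longrightarrow> Y \<noteq> X \<Longrightarrow> \<exists>u\<in>Y. \<exists>w\<in>X-Y. {u,w}\<in>E"
  unfolding conn_def by blast
lemma connI: "(\<And>Y. Y \<subseteq> X \<Longrightarrow> Y \<noteq> {} \<Longrightarrow> Y \<noteq> X \<Longrightarrow> \<exists>u\<in>Y. \<exists>w\<in>X-Y. {u,w}\<in>E) \<Longrightarrow> conn E X"
  unfolding conn_def by blast

lemma conn_single: "conn E {x}"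
  by (rule connI) blast

lemma conn_insert:
  assumes c: "conn E K" and x: "x \<in> K" and y: "y \<notin> K" and e: "{x,y} \<in> E"
  shows "conn E (insert y K)"
proof (rule connI)
  fix Y assume Y: "Y \<subseteq> insert y K" "Y \<noteq> {}" "Y \<noteq> insert y K"
  show "\<exists>u\<in>Y. \<exists>w\<in>insert y K - Y. {u, w} \<in> E"
  proof (cases "y \<in> Y")
    case True
    show ?thesis
    proof (cases "Y - {y} = {}")
      case True
      with \<open>y \<in> Y\<close> have Yy: "Y = {y}" by blast
      have "{y,x} \<in> E" using e by (metis insert_commute)
      moreover have "x \<in> insert y K - Y" using Yy x y by blast
      ultimately show ?thesis using Yy by blast
    next
      case False
      have "Y - {y} \<subseteq> K" using Y by blast
      moreover have "Y - {y} \<noteq> K" using Y True by blast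
      ultimately obtain u w where "u \<in> Y - {y}" "w \<in> K - (Y - {y})" "{u,w} \<in> E"
        using connD[OF c] False by blast
      then show ?thesis using True y by blast
    qed
  next
    case False
    then have YK: "Y \<subseteq> K" using Y by blast
    show ?thesis
    proof (cases "Y = K")
      case True then show ?thesis using x y e False by blast
    next
      case nK: False
      then obtain u w where "u \<in> Y" "w \<in> K - Y" "{u,w} \<in> E"
        using connD[OF c YK] Y by blast
      then show ?thesis by blast
    qed
  qed
qed
lemma conn_grow_aux:
  assumes "conn E C" "finite C"
  shows "1 \<le> j \<Longrightarrow> j \<le> card C \<Longrightarrow> \<exists>D\<subseteq>C. conn E D \<and> card D = j"
proof (induction j)
  case 0 then show ?case by simp
next
  case (Suc j)
  show ?case
  proof (cases "j = 0")
    case True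
    have "C \<noteq> {}" using Suc.prems by auto
    then obtain c where c: "c \<in> C" by blast
    have "{c} \<subseteq> C" "conn E {c}" "card {c} = 1" using c conn_single[of E c] by simp_all
    then have "{c} \<subseteq> C \<and> conn E {c} \<and> card {c} = Suc j" using True by simp
    then show ?thesis by blast
  next
    case False
    then have "1 \<le> j" "j \<le> card C" using Suc.prems by simp_all
    then obtain D where D: "D \<subseteq> C" "conn E D" "card D = j" using Suc.IH by blast
    have finD: "finite D" using D(1) assms(2) by (rule finite_subset)
    have "D \<noteq> C" using D Suc.prems by auto
    moreover have "D \<noteq> {}" using D False by auto
    ultimately obtain u w where uw: "u \<in> D" "w \<in> C - D" "{u,w} \<in> E"
      using connD[OF assms(1) D(1)] by blast
    have "w \<notin> D" using uw(2) by blast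
    then have "conn E (insert w D)" using conn_insert[OF D(2) uw(1) _ uw(3)] by simp
    moreover have "card (insert w D) = Suc j"
      using D(3) uw(2) finD by simp
    moreover have "insert w D \<subseteq> C" using D(1) uw(2) by blast
    ultimately show ?thesis by blast
  qed
qed

lemma conn_grow:
  assumes "conn E C" "finite C" "1 \<le> j" "j \<le> card C"
  shows "\<exists>D\<subseteq>C. conn E D \<and> card D = j"
  using conn_grow_aux[OF assms(1,2)] assms(3,4) by blast

definition closed_in :: "'a set set \<Rightarrow> 'a set \<Rightarrow> 'a set \<Rightarrow> bool" where
  "closed_in E W X \<longleftrightarrow> X \<subseteq> W \<and> \<not> (\<exists>u\<in>X. \<exists>v\<in>W-X. {u,v}\<in>E)"

lemma exists_conn:
  assumes fin: "finite W" and a: "1 \<le> a" and cW: "3*a \<le> card W"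
    and P: "\<And>A B. A \<subseteq> W \<Longrightarrow> B \<subseteq> W \<Longrightarrow> A \<inter> B = {} \<Longrightarrow> a \<le> card A \<Longrightarrow> a \<le> card B
              \<Longrightarrow> \<exists>u\<in>A. \<exists>v\<in>B. {u,v}\<in>E"
  shows "\<exists>C\<subseteq>W. conn E C \<and> a \<le> card C"
proof (rule ccontr)
  assume H: "\<not> ?thesis"
  have "closed_in E W W \<and> a \<le> card W" using cW unfolding closed_in_def by auto
  then obtain X where X: "closed_in E W X" "a \<le> card X"
    and Xmin: "\<And>Y. closed_in E W Y \<and> a \<le> card Y \<Longrightarrow> card X \<le> card Y"
    using ex_has_least_nat[of "\<lambda>X. closed_in E W X \<and> a \<le> card X" W card] by blast
  have XW: "X \<subseteq> W" using X unfolding closed_in_def by auto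
  have finX: "finite X" using XW fin finite_subset by auto
  have "X \<noteq> {}" using X a by auto
  then obtain x where x: "x \<in> X" by auto
  have "(\<lambda>K. K \<subseteq> X \<and> x \<in> K \<and> conn E K) {x}" using x conn_single by auto
  moreover have "\<forall>K. K \<subseteq> X \<and> x \<in> K \<and> conn E K \<longrightarrow> card K < Suc (card X)"
    using finX by (simp add: card_mono le_imp_less_Suc)
  ultimately obtain K where K: "K \<subseteq> X" "x \<in> K" "conn E K"
    and Kmax: "\<And>K'. K' \<subseteq> X \<and> x \<in> K' \<and> conn E K' \<Longrightarrow> card K' \<le> card K"
    using ex_has_greatest_nat[of "\<lambda>K. K \<subseteq> X \<and> x \<in> K \<and> conn E K" "{x}" card "Suc (card X)"]
    by blast
  have finK: "finite K" using K finX finite_subset by auto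
  have cK: "card K < a" using H K XW by (meson dual_order.trans not_le)
  have noedge: "\<not> (\<exists>u\<in>K. \<exists>v\<in>X-K. {u,v}\<in>E)"
  proof
    assume "\<exists>u\<in>K. \<exists>v\<in>X-K. {u,v}\<in>E"
    then obtain u v where uv: "u\<in>K" "v\<in>X-K" "{u,v}\<in>E" by auto
    have "v \<notin> K" using uv(2) by blast
    then have "conn E (insert v K)" using conn_insert[OF K(3) uv(1) _ uv(3)] by simp
    then have "card (insert v K) \<le> card K" using Kmax uv K by auto
    then show False using uv finK by auto
  qed
  have "closed_in E W (X - K)"
    unfolding closed_in_def
  proof (intro conjI notI)
    show "X - K \<subseteq> W" using XW by auto
    assume "\<exists>u\<in>X - K. \<exists>v\<in>W - (X - K). {u, v} \<in> E"
    then obtain u v where uv: "u\<in>X-K" "v \<in> W-(X-K)" "{u,v}\<in>E" by auto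
    show False
    proof (cases "v \<in> K")
      case True
      then show ?thesis using noedge uv by (metis insert_commute)
    next
      case False
      then have "v \<in> W - X" using uv by auto
      then show ?thesis using X(1) uv unfolding closed_in_def by auto
    qed
  qed
  have cXK: "card (X - K) = card X - card K" using K finK by (simp add: card_Diff_subset)
  have "card K \<ge> 1" using K finK by (metis One_nat_def Suc_leI card_gt_0_iff empty_iff)
  have "card X < 2*a"
  proof (rule ccontr)
    assume "\<not> card X < 2*a"
    then have "a \<le> card (X - K)" using cXK cK by auto
    then have "card X \<le> card (X - K)" using Xmin \<open>closed_in E W (X - K)\<close> by auto
    then show False using cXK \<open>card K \<ge> 1\<close> \<open>a \<le> card X\<close> a cK by auto
  qed
  have "card (W - X) = card W - card X" using XW fin by (simp add: card_Diff_subset finite_subset)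
  then have "a \<le> card (W - X)" using cW \<open>card X < 2*a\<close> by auto
  then obtain u v where "u \<in> X" "v \<in> W - X" "{u,v} \<in> E"
    using P[of X "W - X"] XW X by auto
  then show False using X(1) unfolding closed_in_def by auto
qed



lemma conn_contract:
  assumes c: "conn E C" and u: "u \<in> C" and w: "w \<in> C" and uw: "u \<noteq> w"
  shows "conn ({e \<in> E. w \<notin> e} \<union> {{u, x} | x. {w, x} \<in> E \<and> x \<noteq> u}) (C - {w})"
proof (rule connI)
  let ?E = "{e \<in> E. w \<notin> e} \<union> {{u, x} | x. {w, x} \<in> E \<and> x \<noteq> u}"
  fix Y assume Y: "Y \<subseteq> C - {w}" "Y \<noteq> {}" "Y \<noteq> C - {w}"
  show "\<exists>y\<in>Y. \<exists>z\<in>C - {w} - Y. {y, z} \<in> ?E"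
  proof (cases "u \<in> Y")
    case True
    have "insert w Y \<subseteq> C" "insert w Y \<noteq> {}" using Y w by auto
    moreover have "insert w Y \<noteq> C" using Y by auto
    ultimately obtain y z where yz: "y \<in> insert w Y" "z \<in> C - insert w Y" "{y,z} \<in> E"
      using connD[OF c] by blast
    show ?thesis
    proof (cases "y = w")
      case True
      then have "{u,z} \<in> ?E" using yz \<open>u \<in> Y\<close> by auto
      then show ?thesis using yz \<open>u \<in> Y\<close> by auto
    next
      case False
      then have "{y,z} \<in> ?E" using yz by auto
      then show ?thesis using yz False by auto
    qed
  next
    case False
    have "Y \<subseteq> C" "Y \<noteq> C" using Y u False by auto
    then obtain y z where yz: "y \<in> Y" "z \<in> C - Y" "{y,z} \<in> E"
      using connD[OF c] Y by blast
    have "y \<noteq> w" using yz Y by auto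
    show ?thesis
    proof (cases "z = w")
      case True
      then have "{w,y} \<in> E" using yz by (metis insert_commute)
      moreover have "y \<noteq> u" using yz False by auto
      ultimately have "{u,y} \<in> ?E" by auto
      then have "{y,u} \<in> ?E" by (metis insert_commute)
      then show ?thesis using yz u uw False by auto
    next
      case False
      then have "{y,z} \<in> ?E" using yz \<open>y \<noteq> w\<close> by auto
      then show ?thesis using yz False by auto
    qed
  qed
qed

lemma conn_mono_edges:
  assumes "conn E C" "\<And>y z. y \<in> C \<Longrightarrow> z \<in> C \<Longrightarrow> {y,z} \<in> E \<Longrightarrow> {y,z} \<in> E'"
  shows "conn E' C"
proof (rule connI)
  fix Y assume Y: "Y \<subseteq> C" "Y \<noteq> {}" "Y \<noteq> C"
  obtain y z where "y \<in> Y" "z \<in> C - Y" "{y,z} \<in> E" using connD[OF assms(1) Y] by blast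
  moreover have "{y,z} \<in> E'" using assms(2) calculation Y by blast
  ultimately show "\<exists>u\<in>Y. \<exists>w\<in>C-Y. {u,w}\<in>E'" by blast
qed

lemma minor_core:
  "finite V \<Longrightarrow> wf_graph (V,E) \<Longrightarrow> V = (\<Union>i<k. B i) \<Longrightarrow> (\<forall>i<k. B i \<noteq> {} \<and> conn E (B i))
   \<Longrightarrow> (\<forall>i<k. \<forall>j<k. i \<noteq> j \<longrightarrow> B i \<inter> B j = {})
   \<Longrightarrow> (\<forall>i<k. \<forall>j<k. i \<noteq> j \<longrightarrow> (\<exists>x\<in>B i. \<exists>y\<in>B j. {x,y} \<in> E))
   \<Longrightarrow> \<exists>H. contracts_to (V,E) H \<and> is_complete_graph k H"
proof (induction "card V" arbitrary: V E B rule: less_induct)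
  case less
  note fin = less.prems(1) and wf = less.prems(2) and VB = less.prems(3) and Bc = less.prems(4)
   and disj = less.prems(5) and adj = less.prems(6)
  show ?case
  proof (cases "\<forall>i<k. card (B i) = 1")
    case True
    then have ex: "\<forall>i. \<exists>x. i < k \<longrightarrow> B i = {x}" by (auto simp: card_1_singleton_iff)
    obtain r where r0: "\<forall>i. i < k \<longrightarrow> B i = {r i}" using choice[OF ex] by blast
    have r: "\<And>i. i < k \<Longrightarrow> B i = {r i}" using r0 by blast
    have VB': "V = r ` {..<k}" using VB r by auto
    have inj: "inj_on r {..<k}"
    proof (rule inj_onI)
      fix i j assume ij: "i \<in> {..<k}" "j \<in> {..<k}" "r i = r j"
      show "i = j"
      proof (rule ccontr)
        assume "i \<noteq> j"
        then have "B i \<inter> B j = {}" using disj ij by simp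
        moreover have "r i \<in> B i \<inter> B j" using r ij by simp
        ultimately show False by blast
      qed
    qed
    have cV: "card V = k" using VB' inj by (simp add: card_image)
    have "E = {{a, b} |a b. a \<in> V \<and> b \<in> V \<and> a \<noteq> b}"
    proof
      show "E \<subseteq> {{a, b} |a b. a \<in> V \<and> b \<in> V \<and> a \<noteq> b}" using wf unfolding wf_graph_def by fastforce
      show "{{a, b} |a b. a \<in> V \<and> b \<in> V \<and> a \<noteq> b} \<subseteq> E"
      proof
        fix e assume "e \<in> {{a, b} |a b. a \<in> V \<and> b \<in> V \<and> a \<noteq> b}"
        then obtain a b where ab: "e = {a,b}" "a \<in> V" "b \<in> V" "a \<noteq> b" by auto
        then obtain i j where ij: "i < k" "j < k" "a = r i" "b = r j" using VB' by auto
        then have "i \<noteq> j" using ab by auto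
        then obtain x y where "x \<in> B i" "y \<in> B j" "{x,y} \<in> E" using adj ij by blast
        then show "e \<in> E" using r ij ab by auto
      qed
    qed
    then have "is_complete_graph k (V,E)" unfolding is_complete_graph_def using fin cV by auto
    then show ?thesis using contracts_to.refl by blast
  next
    case False
    then obtain i where i: "i < k" "card (B i) \<noteq> 1" by auto
    obtain u where u: "u \<in> B i" using Bc i by auto
    have "B i \<noteq> {u}" using i by auto
    then obtain w where w: "w \<in> B i - {u}" "{u,w} \<in> E"
      using connD[of E "B i" "{u}"] Bc i u by blast
    let ?E = "{e \<in> E. w \<notin> e} \<union> {{u, x} | x. {w, x} \<in> E \<and> x \<noteq> u}"
    let ?V = "V - {w}"
    let ?B = "B(i := B i - {w})"
    have wV: "w \<in> V" using w i VB by auto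
    have uV: "u \<in> V" using u i VB by auto
    have contr: "contract (V,E) u w = (?V, ?E)" unfolding contract_def by simp
    have wfE: "\<And>e. e \<in> E \<Longrightarrow> \<exists>a b. a \<in> V \<and> b \<in> V \<and> a \<noteq> b \<and> e = {a,b}"
      using wf unfolding wf_graph_def by auto
    have wf': "wf_graph (?V, ?E)"
      unfolding wf_graph_def
    proof (intro conjI ballI)
      show "finite (fst (?V, ?E))" using fin by auto
      fix e assume e: "e \<in> snd (?V, ?E)"
      show "\<exists>a b. a \<in> fst (?V, ?E) \<and> b \<in> fst (?V, ?E) \<and> a \<noteq> b \<and> e = {a, b}"
      proof (cases "e \<in> E \<and> w \<notin> e")
        case True
        then show ?thesis using wfE by fastforce
      next
        case False
        then obtain x where x: "e = {u,x}" "{w,x} \<in> E" "x \<noteq> u" using e by auto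
        obtain a b where "a \<in> V" "b \<in> V" "a \<noteq> b" "{w,x} = {a,b}" using wfE x by blast
        then have "x \<in> V" "x \<noteq> w" by (auto simp: doubleton_eq_iff)
        then show ?thesis using x uV w by auto
      qed
    qed
    have wnot: "\<And>j. j < k \<Longrightarrow> j \<noteq> i \<Longrightarrow> w \<notin> B j" using disj w i by blast
    have VB2: "?V = (\<Union>j<k. ?B j)"
    proof (rule equalityI; rule subsetI)
      fix x assume x: "x \<in> ?V"
      then obtain j where j: "j < k" "x \<in> B j" using VB by blast
      then have "x \<in> ?B j" using x by (cases "j = i") auto
      then show "x \<in> (\<Union>j<k. ?B j)" using j by blast
    next
      fix x assume "x \<in> (\<Union>j<k. ?B j)"
      then obtain j where j: "j < k" "x \<in> ?B j" by blast
      show "x \<in> ?V"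
      proof (cases "j = i")
        case True then show ?thesis using j VB by auto
      next
        case False then show ?thesis using j VB wnot[of j] by auto
      qed
    qed
    have Bc2: "\<forall>j<k. ?B j \<noteq> {} \<and> conn ?E (?B j)"
    proof (intro allI impI)
      fix j assume j: "j < k"
      show "?B j \<noteq> {} \<and> conn ?E (?B j)"
      proof (cases "j = i")
        case True
        have "conn ?E (B i - {w})" using conn_contract[of E "B i" u w] Bc i u w by blast
        moreover have "u \<in> B i - {w}" using u w by blast
        ultimately show ?thesis using True by auto
      next
        case False
        have wj: "w \<notin> B j" using wnot[OF j False] .
        have "conn ?E (B j)"
        proof (rule conn_mono_edges[of E])
          show "conn E (B j)" using Bc j by blast
          fix y z assume "y \<in> B j" "z \<in> B j" "{y,z} \<in> E"
          then show "{y,z} \<in> ?E" using wj by auto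
        qed
        then show ?thesis using Bc j False by simp
      qed
    qed
    have disj2: "\<forall>j<k. \<forall>l<k. j \<noteq> l \<longrightarrow> ?B j \<inter> ?B l = {}"
    proof (intro allI impI)
      fix j l assume jl: "j < k" "l < k" "j \<noteq> l"
      have "?B j \<subseteq> B j" "?B l \<subseteq> B l" by auto
      then show "?B j \<inter> ?B l = {}" using disj jl by blast
    qed
    have adj1: "\<exists>x\<in>?B j. \<exists>y\<in>?B l. {x,y} \<in> ?E" if jl: "j < k" "l < k" "j \<noteq> l" "l \<noteq> i" for j l
    proof -
      obtain x y where xy: "x \<in> B j" "y \<in> B l" "{x,y} \<in> E" using adj jl by blast
      have yw: "y \<noteq> w" using wnot[OF jl(2) jl(4)] xy(2) by blast
      have yB: "y \<in> ?B l" using xy(2) jl(4) by simp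
      show ?thesis
      proof (cases "x = w")
        case True
        have ji: "j = i" using True xy(1) wnot[OF jl(1)] by blast
        have "B i \<inter> B l = {}" using disj jl ji i by blast
        then have "y \<noteq> u" using u xy(2) by blast
        then have "{u,y} \<in> ?E" using xy(3) True by blast
        moreover have "u \<in> ?B j" using ji u w by auto
        ultimately show ?thesis using yB by blast
      next
        case False
        then have "{x,y} \<in> ?E" using xy(3) yw by blast
        moreover have "x \<in> ?B j" using xy(1) False by (cases "j = i") auto
        ultimately show ?thesis using yB by blast
      qed
    qed
    have adj2: "\<forall>j<k. \<forall>l<k. j \<noteq> l \<longrightarrow> (\<exists>x\<in>?B j. \<exists>y\<in>?B l. {x,y} \<in> ?E)"
    proof (intro allI impI)
      fix j l assume jl: "j < k" "l < k" "j \<noteq> l"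
      show "\<exists>x\<in>?B j. \<exists>y\<in>?B l. {x,y} \<in> ?E"
      proof (cases "l = i")
        case False then show ?thesis using adj1 jl by blast
      next
        case True
        then have "j \<noteq> i" using jl by auto
        then obtain x y where xy: "x \<in> ?B l" "y \<in> ?B j" "{x,y} \<in> ?E" using adj1[of l j] jl by blast
        have "{y,x} = {x,y}" by (rule insert_commute)
        then have "{y,x} \<in> ?E" using xy(3) by simp
        then show ?thesis using xy(1,2) by blast
      qed
    qed
    have "card ?V < card V" by (rule card_Diff1_less[OF fin wV])
    then obtain H where H: "contracts_to (?V, ?E) H" "is_complete_graph k H"
      using less.hyps[OF _ _ wf' VB2 Bc2 disj2 adj2] fin by auto
    moreover have "{u,w} \<in> snd (V,E)" "u \<noteq> w" using w by auto
    ultimately have "contracts_to (V,E) H" using contracts_to.step[of u w "(V,E)" H] contr by simp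
    then show ?thesis using H(2) by blast
  qed
qed



lemma kminor:
  assumes fin: "finite V" and wf: "wf_graph (V,E)" and a: "1 \<le> a" and sz: "(k+2)*a \<le> card V"
    and P: "\<And>A B. A \<subseteq> V \<Longrightarrow> B \<subseteq> V \<Longrightarrow> A \<inter> B = {} \<Longrightarrow> card A = a \<Longrightarrow> card B = a
              \<Longrightarrow> \<exists>u\<in>A. \<exists>v\<in>B. {u,v}\<in>E"
  shows "has_K_minor k (V,E)"
proof -
  have Pge: "\<exists>u\<in>A. \<exists>v\<in>B. {u,v}\<in>E"
    if AB: "A \<subseteq> V" "B \<subseteq> V" "A \<inter> B = {}" "a \<le> card A" "a \<le> card B" for A B
  proof -
    obtain A' where A': "A' \<subseteq> A" "card A' = a" using obtain_subset_with_card_n[OF AB(4)] by blast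
    obtain B' where B': "B' \<subseteq> B" "card B' = a" using obtain_subset_with_card_n[OF AB(5)] by blast
    have "A' \<subseteq> V" "B' \<subseteq> V" "A' \<inter> B' = {}" using A'(1) B'(1) AB(1,2,3) by blast+
    then obtain u v where "u \<in> A'" "v \<in> B'" "{u,v}\<in>E" using P[of A' B'] A'(2) B'(2) by blast
    then show ?thesis using A'(1) B'(1) by blast
  qed
  have br: "j \<le> k \<Longrightarrow> \<exists>B. (\<forall>i<j. B i \<subseteq> V \<and> conn E (B i) \<and> card (B i) = a) \<and>
              (\<forall>i<j. \<forall>l<j. i \<noteq> l \<longrightarrow> B i \<inter> B l = {})" for j
  proof (induction j)
    case 0 then show ?case by simp
  next
    case (Suc j)
    then obtain B where B: "\<forall>i<j. B i \<subseteq> V \<and> conn E (B i) \<and> card (B i) = a"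
      "\<forall>i<j. \<forall>l<j. i \<noteq> l \<longrightarrow> B i \<inter> B l = {}" by auto
    let ?U = "\<Union>i<j. B i"
    have finB: "\<forall>i\<in>{..<j}. finite (B i)" using B(1) fin finite_subset by blast
    have dB: "\<forall>i\<in>{..<j}. \<forall>l\<in>{..<j}. i \<noteq> l \<longrightarrow> B i \<inter> B l = {}" using B(2) by simp
    have "card ?U = (\<Sum>i<j. card (B i))"
      using card_UN_disjoint[OF _ finB dB] by simp
    also have "\<dots> = j * a" using B(1) by simp
    finally have cU: "card ?U = j * a" .
    have UV: "?U \<subseteq> V" using B(1) by blast
    let ?W = "V - ?U"
    have finW: "finite ?W" using fin by simp
    have cW0: "card ?W = card V - j*a" using cU UV fin by (simp add: card_Diff_subset finite_subset)
    have "j*a + 3*a \<le> (k+2)*a"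
    proof -
      have "j + 3 \<le> k + 2" using Suc.prems by simp
      then have "(j+3)*a \<le> (k+2)*a" by (rule mult_le_mono1)
      then show ?thesis by (simp add: add_mult_distrib)
    qed
    then have "3*a \<le> card V - j*a" using sz by linarith
    then have cW: "3*a \<le> card ?W" using cW0 by simp
    have PW: "\<exists>u\<in>A. \<exists>v\<in>B. {u,v}\<in>E"
      if AB: "A \<subseteq> ?W" "B \<subseteq> ?W" "A \<inter> B = {}" "a \<le> card A" "a \<le> card B" for A B
    proof -
      have "A \<subseteq> V" "B \<subseteq> V" using AB(1,2) by blast+
      then show ?thesis using Pge[OF _ _ AB(3) AB(4) AB(5)] by blast
    qed
    obtain C where C: "C \<subseteq> ?W" "conn E C" "a \<le> card C"
      using exists_conn[OF finW a cW PW] by blast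
    have finC: "finite C" using C(1) finW finite_subset by blast
    obtain D where D: "D \<subseteq> C" "conn E D" "card D = a" using conn_grow[OF C(2) finC a C(3)] by blast
    have DV: "D \<subseteq> V" and DU: "\<forall>i<j. B i \<inter> D = {}" using D(1) C(1) by blast+
    let ?B = "B(j := D)"
    have "\<forall>i<Suc j. ?B i \<subseteq> V \<and> conn E (?B i) \<and> card (?B i) = a"
    proof (intro allI impI)
      fix i assume "i < Suc j"
      then show "?B i \<subseteq> V \<and> conn E (?B i) \<and> card (?B i) = a"
        using B(1) D DV by (cases "i = j") simp_all
    qed
    moreover have "\<forall>i<Suc j. \<forall>l<Suc j. i \<noteq> l \<longrightarrow> ?B i \<inter> ?B l = {}"
    proof (intro allI impI)
      fix i l assume il: "i < Suc j" "l < Suc j" "i \<noteq> l"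
      show "?B i \<inter> ?B l = {}"
      proof (cases "i = j")
        case True
        then have lj: "l < j" using il by simp
        then have "B l \<inter> D = {}" using DU by blast
        then show ?thesis using True il by auto
      next
        case False
        then have i: "i < j" using il by simp
        show ?thesis
        proof (cases "l = j")
          case True
          have "B i \<inter> D = {}" using DU i by blast
          then show ?thesis using True \<open>i \<noteq> j\<close> by simp
        next
          case False
          then show ?thesis using B(2) i il \<open>i \<noteq> j\<close> by simp
        qed
      qed
    qed
    ultimately show ?case by (intro exI[of _ "?B"] conjI)
  qed
  obtain B where B: "\<forall>i<k. B i \<subseteq> V \<and> conn E (B i) \<and> card (B i) = a"
      "\<forall>i<k. \<forall>l<k. i \<noteq> l \<longrightarrow> B i \<inter> B l = {}" using br[of k] by blast
  define U where "U = (\<Union>i<k. B i)"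
  define ES where "ES = {e\<in>E. e \<subseteq> U}"
  have UV: "U \<subseteq> V" using B(1) unfolding U_def by blast
  have finU: "finite U" using UV fin finite_subset by blast
  have wfS: "wf_graph (U, ES)"
    unfolding wf_graph_def
  proof (intro conjI ballI)
    show "finite (fst (U, ES))" using finU by simp
    fix e assume "e \<in> snd (U, ES)"
    then have e: "e \<in> E" "e \<subseteq> U" unfolding ES_def by auto
    have "\<forall>e\<in>E. \<exists>x y. x \<in> V \<and> y \<in> V \<and> x \<noteq> y \<and> e = {x,y}"
      using wf by (simp add: wf_graph_def)
    then obtain x y where xy: "x \<noteq> y" "e = {x,y}" using e(1) by blast
    have "x \<in> U" "y \<in> U" using e(2) xy(2) by blast+
    then show "\<exists>x y. x \<in> fst (U, ES) \<and> y \<in> fst (U, ES) \<and> x \<noteq> y \<and> e = {x, y}"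
      using xy by (intro exI[of _ x] exI[of _ y]) simp
  qed
  have sub: "subgraph (U, ES) (V,E)" unfolding subgraph_def using wfS UV unfolding ES_def by auto
  have Bc: "\<forall>i<k. B i \<noteq> {} \<and> conn ES (B i)"
  proof (intro allI impI conjI)
    fix i assume i: "i < k"
    have "card (B i) = a" using B(1) i by blast
    then show "B i \<noteq> {}" using a by auto
    have BU: "B i \<subseteq> U" using i unfolding U_def by blast
    show "conn ES (B i)"
    proof (rule conn_mono_edges[of E])
      show "conn E (B i)" using B(1) i by blast
      fix y z assume "y \<in> B i" "z \<in> B i" "{y,z} \<in> E"
      then show "{y,z} \<in> ES" using BU unfolding ES_def by blast
    qed
  qed
  have adj: "\<forall>i<k. \<forall>j<k. i \<noteq> j \<longrightarrow> (\<exists>x\<in>B i. \<exists>y\<in>B j. {x,y} \<in> ES)"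
  proof (intro allI impI)
    fix i j assume ij: "i < k" "j < k" "i \<noteq> j"
    have "B i \<subseteq> V" "B j \<subseteq> V" "B i \<inter> B j = {}" "card (B i) = a" "card (B j) = a"
      using B ij by blast+
    then obtain x y where xy: "x \<in> B i" "y \<in> B j" "{x,y} \<in> E" using P by blast
    have "B i \<subseteq> U" "B j \<subseteq> U" using ij unfolding U_def by blast+
    then have "{x,y} \<in> ES" using xy unfolding ES_def by blast
    then show "\<exists>x\<in>B i. \<exists>y\<in>B j. {x,y} \<in> ES" using xy by blast
  qed
  obtain H where "contracts_to (U, ES) H" "is_complete_graph k H"
    using minor_core[OF finU wfS U_def Bc B(2) adj] by blast
  then show ?thesis unfolding has_K_minor_def using sub by blast
qed



lemma gf:
  fixes p t :: real
  assumes fin: "finite S" and X: "X \<subseteq> S"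
  shows "(\<Sum>E\<in>Pow S. p ^ card E * (1-p) ^ (card S - card E) * t ^ card (E \<inter> X))
         = (p*t + (1-p)) ^ card X"
proof -
  let ?f1 = "\<lambda>e. p * (if e \<in> X then t else 1)"
  let ?f2 = "\<lambda>e. 1 - p"
  have "(\<Prod>e\<in>S. ?f1 e + ?f2 e) = (\<Sum>E\<in>Pow S. (\<Prod>e\<in>E. ?f1 e) * (\<Prod>e\<in>S-E. ?f2 e))"
    by (rule prod_add[OF fin])
  moreover have "(\<Prod>e\<in>S. ?f1 e + ?f2 e) = (p*t + (1-p)) ^ card X"
  proof -
    have "(\<Prod>e\<in>S. ?f1 e + ?f2 e) = (\<Prod>e\<in>S. if e \<in> X then p*t + (1-p) else 1)"
      by (rule prod.cong) auto
    also have "\<dots> = (\<Prod>e\<in>S \<inter> {e. e \<in> X}. p*t + (1-p)) * (\<Prod>e\<in>S \<inter> - {e. e \<in> X}. 1)"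
      by (rule prod.If_cases[OF fin])
    also have "\<dots> = (p*t + (1-p)) ^ card X"
      using X by (simp add: Int_absorb1 Int_def[symmetric] inf.absorb_iff2)
    finally show ?thesis .
  qed
  moreover have "(\<Prod>e\<in>E. ?f1 e) * (\<Prod>e\<in>S-E. ?f2 e)
      = p ^ card E * (1-p) ^ (card S - card E) * t ^ card (E \<inter> X)" if E: "E \<subseteq> S" for E
  proof -
    have finE: "finite E" using E fin finite_subset by auto
    have "(\<Prod>e\<in>E. ?f1 e) = p ^ card E * (\<Prod>e\<in>E. if e \<in> X then t else 1)"
      by (simp add: prod.distrib)
    also have "(\<Prod>e\<in>E. if e \<in> X then t else 1) = t ^ card (E \<inter> X)"
      by (simp add: prod.If_cases[OF finE] Int_def)
    finally have 1: "(\<Prod>e\<in>E. ?f1 e) = p ^ card E * t ^ card (E \<inter> X)" .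
    have 2: "(\<Prod>e\<in>S-E. ?f2 e) = (1-p) ^ (card S - card E)"
      using E fin by (simp add: card_Diff_subset finE)
    show ?thesis using 1 2 by simp
  qed
  ultimately show ?thesis
    by (metis (no_types, lifting) PowD sum.cong)
qed



definition cross :: "nat set \<Rightarrow> nat set \<Rightarrow> nat set set" where
  "cross A B = {{u,v} | u v. u \<in> A \<and> v \<in> B}"

lemma all_edges_fin: "finite (all_edges n)" and all_edges_card: "card (all_edges n) \<le> n^2"
proof -
  have sub: "all_edges n \<subseteq> (\<lambda>(a,b). {a,b}) ` ({..<n} \<times> {..<n})"
    unfolding all_edges_def by auto
  then show "finite (all_edges n)" by (rule finite_subset) auto
  have "card (all_edges n) \<le> card ((\<lambda>(a,b). {a,b}) ` ({..<n} \<times> {..<n}))"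
    using sub by (intro card_mono) auto
  also have "\<dots> \<le> card ({..<n} \<times> {..<n})" by (rule card_image_le) auto
  finally show "card (all_edges n) \<le> n^2" by (simp add: power2_eq_square)
qed

lemma cross_card:
  assumes "A \<inter> B = {}" "finite A" "finite B"
  shows "card (cross A B) = card A * card B"
proof -
  have eq: "cross A B = (\<lambda>(u,v). {u,v}) ` (A \<times> B)" unfolding cross_def by auto
  have "inj_on (\<lambda>(u,v). {u,v}) (A \<times> B)"
    using assms(1) unfolding inj_on_def by (auto simp: doubleton_eq_iff)
  then show ?thesis using eq assms by (simp add: card_image card_cartesian_product)
qed

lemma cross_sub:
  assumes "A \<subseteq> {..<n}" "B \<subseteq> {..<n}" "A \<inter> B = {}"
  shows "cross A B \<subseteq> all_edges n"
  using assms unfolding cross_def all_edges_def by blast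

lemma wf_all: "E \<subseteq> all_edges n \<Longrightarrow> wf_graph ({..<n}, E)"
  unfolding wf_graph_def all_edges_def by fastforce



lemma exp1_ge2: "2 \<le> exp (1::real)"
  using exp_ge_add_one_self[of "1::real"] by simp

lemma pow_le_exp: "(2::real) ^ m \<le> exp (real m)"
proof -
  have "(2::real)^m \<le> exp 1 ^ m" using exp1_ge2 by (intro power_mono) auto
  also have "\<dots> = exp (real m)" by (simp add: exp_of_nat_mult[symmetric])
  finally show ?thesis .
qed

lemma term1:
  fixes k n N :: nat and p :: real
  assumes k: "k \<ge> 3" and n: "n \<ge> 1" and p: "p = 1000 * real k ^ 2 / real n" and N: "N \<le> n^2"
  shows "(p*2 + (1-p)) ^ N / 2 ^ (2000*k^2*n) \<le> exp (- 2 * real n)"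
proof -
  define m where "m = 1000*k^2*n"
  have p0: "0 \<le> p" using p by simp
  have "(p*2 + (1-p)) ^ N = (1 + p) ^ N" by (simp add: algebra_simps)
  also have "\<dots> \<le> exp p ^ N" using p0 by (intro power_mono) (auto simp: add.commute)
  also have "\<dots> = exp (real N * p)" by (simp add: exp_of_nat_mult[symmetric])
  also have "\<dots> \<le> exp (real m)"
  proof -
    have "real N * p \<le> real (n^2) * p" using N p0 by (intro mult_right_mono) auto
    also have "\<dots> = real m" using n unfolding p m_def by (simp add: power2_eq_square field_simps)
    finally show ?thesis by simp
  qed
  also have "\<dots> = exp 1 ^ m" by (simp add: exp_of_nat_mult[symmetric])
  also have "\<dots> \<le> 3 ^ m" using exp_le by (intro power_mono) auto
  finally have A: "(p*2 + (1-p)) ^ N \<le> 3 ^ m" .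
  have B: "(2::real) ^ (2000*k^2*n) = 4 ^ m"
  proof -
    have e: "2000*k^2*n = 2*m" unfolding m_def by simp
    have "(2::real)^(2000*k^2*n) = 2^(2*m)" by (simp only: e)
    also have "\<dots> = (2^2)^m" by (rule power_mult)
    also have "\<dots> = 4^m" by simp
    finally show ?thesis .
  qed
  have "(p*2 + (1-p)) ^ N / 2 ^ (2000*k^2*n) \<le> 3 ^ m / 4 ^ m"
    using A B by (simp add: divide_right_mono)
  also have "\<dots> = (3/4) ^ m" by (simp add: power_divide)
  also have "\<dots> \<le> (3/4) ^ (8*n)"
  proof (rule power_decreasing)
    have "3*3 \<le> k*k" using mult_le_mono[OF k k] .
    then have "8 \<le> 1000*k^2" using power2_eq_square[of k] by linarith

    then show "8*n \<le> m" unfolding m_def by (rule mult_le_mono1)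
  qed auto
  also have "\<dots> = ((3/4)^8) ^ n" by (simp add: power_mult)
  also have "\<dots> \<le> exp (-2) ^ n"
  proof (rule power_mono)
    have "exp (2::real) = exp 1 ^ 2" by (simp add: exp_of_nat_mult[symmetric])
    also have "\<dots> \<le> 3^2" using exp_le by (intro power_mono) auto
    finally have "exp (2::real) \<le> 9" by simp
    then have "1/9 \<le> exp (-2::real)" by (simp add: exp_minus field_simps)
    moreover have "((3::real)/4)^8 \<le> 1/9" by (simp add: power_divide)
    ultimately show "((3::real)/4)^8 \<le> exp (-2)" by linarith
  qed auto
  also have "\<dots> = exp (-2 * real n)" by (simp add: exp_of_nat_mult[symmetric] mult.commute)
  finally show ?thesis .
qed

lemma term2:
  fixes k n a :: nat and p :: real
  assumes n: "n \<ge> 1" and p: "p = 1000 * real k ^ 2 / real n" and p1: "p \<le> 1" and ka: "n \<le> 2*k*a"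
  shows "4^n * ((p*(1/2) + (1-p)) ^ (a*a) * 2 ^ (40*n)) \<le> exp (- 2 * real n)"
proof -
  have p0: "0 \<le> p" using p by simp
  have "(p*(1/2) + (1-p)) ^ (a*a) = (1 + (- p/2)) ^ (a*a)" by (simp add: algebra_simps)
  also have "\<dots> \<le> exp (-p/2) ^ (a*a)" using p1 exp_ge_add_one_self[of "-p/2"] by (intro power_mono) auto
  also have "\<dots> = exp (- (p/2 * real (a*a)))" by (simp add: exp_of_nat_mult[symmetric] mult.commute)
  also have "\<dots> \<le> exp (- 125 * real n)"
  proof -
    have "real n \<le> 2 * real k * real a" using ka by (metis of_nat_le_iff of_nat_mult of_nat_numeral)
    then have "real n * real n \<le> (2 * real k * real a) * (2 * real k * real a)"
      by (intro mult_mono) auto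
    then have "250 * real n * real n \<le> 1000 * real k ^ 2 * real (a*a)"
      by (simp add: power2_eq_square algebra_simps)
    then have "125 * real n \<le> p/2 * real (a*a)" using n unfolding p
      by (simp add: field_simps power2_eq_square)
    then show ?thesis by simp
  qed
  finally have A: "(p*(1/2) + (1-p)) ^ (a*a) \<le> exp (- 125 * real n)" .
  have f: "(4::real)^n = 2^(2*n)" by (simp add: power_mult)
  have "(4::real)^n * 2^(40*n) = 2^(2*n + 40*n)" by (simp only: f power_add)
  also have "2*n + 40*n = 42*n" by simp
  finally have g: "(4::real)^n * 2^(40*n) = 2^(42*n)" .
  have h: "(2::real)^(42*n) \<le> exp (real (42*n))" by (rule pow_le_exp)
  have B: "(4::real)^n * 2^(40*n) \<le> exp (42 * real n)" using g h by simp
  have "4^n * ((p*(1/2) + (1-p)) ^ (a*a) * 2 ^ (40*n)) = ((4::real)^n * 2^(40*n)) * (p*(1/2) + (1-p)) ^ (a*a)"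
    by simp
  also have "\<dots> \<le> exp (42 * real n) * exp (- 125 * real n)"
    using A B p1 p0 by (intro mult_mono) auto
  also have "\<dots> = exp (- 83 * real n)" by (simp add: exp_add[symmetric])
  also have "\<dots> \<le> exp (- 2 * real n)" by simp
  finally show ?thesis .
qed



definition Pairs :: "nat \<Rightarrow> nat \<Rightarrow> (nat set \<times> nat set) set" where
  "Pairs n a = {(A,B). A \<subseteq> {..<n} \<and> B \<subseteq> {..<n} \<and> A \<inter> B = {} \<and> card A = a \<and> card B = a}"

lemma Pairs_fin: "finite (Pairs n a)" and Pairs_card: "card (Pairs n a) \<le> 4^n"
proof -
  have sub: "Pairs n a \<subseteq> Pow {..<n} \<times> Pow {..<n}" unfolding Pairs_def by auto
  then show "finite (Pairs n a)" by (rule finite_subset) auto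
  have "card (Pairs n a) \<le> card (Pow {..<n} \<times> Pow {..<(n::nat)})" using sub by (intro card_mono) auto
  also have "\<dots> = 2^n * 2^n" by (simp add: card_cartesian_product card_Pow)
  also have "(2::nat)^n * 2^n = (2*2)^n" by (rule power_mult_distrib[symmetric])
  also have "(2*2::nat)^n = 4^n" by simp
  finally show "card (Pairs n a) \<le> 4^n" .
qed

lemma det:
  fixes k n a :: nat
  assumes k: "k \<ge> 1" and a: "1 \<le> a" "(k+2)*a \<le> n" and E: "E \<subseteq> all_edges n"
    and cE: "card E \<le> 2000*k^2*n"
    and cr: "\<forall>(A,B)\<in>Pairs n a. 40*n < card (E \<inter> cross A B)"
  shows "real (card E) \<le> 2000 * real k ^ 2 * real n \<and> far_from_K_minor_free (1 / (50 * real k ^ 2)) k ({..<n}, E)"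
proof
  have "real (card E) \<le> real (2000*k^2*n)" using cE by (simp only: of_nat_le_iff)
  then show "real (card E) \<le> 2000 * real k ^ 2 * real n" by simp
  have finE: "finite E" using E all_edges_fin finite_subset by blast
  show "far_from_K_minor_free (1 / (50 * real k ^ 2)) k ({..<n}, E)"
    unfolding far_from_K_minor_free_def
  proof (intro allI impI, simp only: fst_conv snd_conv)
    fix F assume F: "F \<subseteq> E" and nm: "\<not> has_K_minor k ({..<n}, E - F)"
    show "1 / (50 * real k ^ 2) * real (card E) < real (card F)"
    proof (rule ccontr)
      assume "\<not> ?thesis"
      then have "real (card F) \<le> 1 / (50 * real k ^ 2) * real (card E)" by simp
      also have "\<dots> \<le> 1 / (50 * real k ^ 2) * (2000 * real k ^ 2 * real n)"
        using \<open>real (card E) \<le> 2000 * real k ^ 2 * real n\<close> by (intro mult_left_mono) auto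
      also have "\<dots> = 40 * real n" using k by (simp add: field_simps)
      finally have cF: "card F \<le> 40 * n" by linarith
      have finF: "finite F" using F finE finite_subset by blast
      have "has_K_minor k ({..<n}, E - F)"
      proof (rule kminor)
        show "finite {..<n}" by simp
        show "wf_graph ({..<n}, E - F)" using E by (intro wf_all) auto
        show "1 \<le> a" by fact
        show "(k + 2) * a \<le> card {..<n}" using a by simp
        fix A B assume AB: "A \<subseteq> {..<n}" "B \<subseteq> {..<n}" "A \<inter> B = {}" "card A = a" "card B = a"
        have P: "(A,B) \<in> Pairs n a" unfolding Pairs_def using AB by simp
        have lt: "40*n < card (E \<inter> cross A B)" using bspec[OF cr P] by simp
        have "\<not> (E \<inter> cross A B \<subseteq> F)"
        proof
          assume "E \<inter> cross A B \<subseteq> F"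
          then have "card (E \<inter> cross A B) \<le> card F" by (rule card_mono[OF finF])
          then show False using lt cF by linarith
        qed
        then obtain e where e: "e \<in> E" "e \<in> cross A B" "e \<notin> F" by blast
        then obtain u v where uv: "e = {u,v}" "u \<in> A" "v \<in> B" unfolding cross_def by blast
        have "{u,v} \<in> E - F" using e uv(1) by simp
        then show "\<exists>u\<in>A. \<exists>v\<in>B. {u, v} \<in> E - F" using uv(2,3) by blast
      qed
      then show False using nm by simp
    qed
  qed
qed


lemma main_n:
  fixes k n :: nat
  assumes k: "k \<ge> 3" and nN: "n \<ge> 1000*k^2 + (k+2)^2 + 1"
  shows "gnp_prob n (1000 * real k ^ 2 / real n)
             (\<lambda>G. real (card (snd G)) \<le> 2000 * real k ^ 2 * real n \<and>
                  far_from_K_minor_free (1 / (50 * real k ^ 2)) k G)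
           \<ge> 1 - 2 powr (- 1 * real n)"
proof -
  define p where "p = 1000 * real k ^ 2 / real n"
  define a where "a = n div (k+2)"
  define S where "S = all_edges n"
  define M where "M = 2000*k^2*n"
  define w where "w = (\<lambda>E::nat set set. p ^ card E * (1-p) ^ (card S - card E))"
  define Good where "Good = (\<lambda>E::nat set set. card E \<le> M \<and> (\<forall>(A,B)\<in>Pairs n a. 40*n < card (E \<inter> cross A B)))"
  define Q where "Q = (\<lambda>G::nat graph. real (card (snd G)) \<le> 2000 * real k ^ 2 * real n \<and>
                  far_from_K_minor_free (1 / (50 * real k ^ 2)) k G)"
  have n1: "n \<ge> 1" using nN by auto
  have p0: "0 \<le> p" unfolding p_def by simp
  have p1: "p \<le> 1"
  proof -
    have "1000*k^2 \<le> n" using nN by simp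
    then have "real (1000*k^2) \<le> real n" by (simp only: of_nat_le_iff)
    then have "1000 * real k ^ 2 \<le> real n" by simp
    then show ?thesis unfolding p_def using n1 by (simp add: divide_le_eq_1)
  qed
  have finS: "finite S" unfolding S_def by (rule all_edges_fin)
  have w0: "\<And>E. 0 \<le> w E" unfolding w_def using p0 p1 by simp
  have a1: "k+2 \<le> a"
  proof -
    have "(k+2)*(k+2) \<le> n" using nN by (simp add: power2_eq_square)
    then have "(k+2)*(k+2) div (k+2) \<le> n div (k+2)" by (rule div_le_mono)
    moreover have "(k+2)*(k+2) div (k+2) = k+2" by (rule nonzero_mult_div_cancel_right) simp
    ultimately show ?thesis unfolding a_def by simp
  qed
  have aa: "1 \<le> a" using a1 by simp
  have ka1: "(k+2)*a \<le> n" unfolding a_def by (rule times_div_less_eq_dividend)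
  have ka2: "n \<le> 2*k*a"
  proof -
    have "n div (k+2) * (k+2) + n mod (k+2) = n" by (rule div_mult_mod_eq)
    then have "(k+2)*a + n mod (k+2) = n" unfolding a_def by (simp only: mult.commute)
    then have "n = (k+2)*a + n mod (k+2)" by simp
    moreover have "n mod (k+2) < k+2" by simp
    moreover have "(k+2)*a + a \<le> 2*k*a"
    proof -
      have "(k+2)*a + a = (k+3)*a" by (simp add: algebra_simps)
      also have "\<dots> \<le> (2*k)*a" using k by (intro mult_le_mono1) auto
      finally show ?thesis by simp
    qed
    ultimately show ?thesis using a1 by linarith
  qed
  have sub: "{E\<in>Pow S. Good E} \<subseteq> {E. E \<subseteq> S \<and> Q ({..<n}, E)}"
  proof
    fix E assume E: "E \<in> {E\<in>Pow S. Good E}"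
    then have "E \<subseteq> all_edges n" "card E \<le> 2000*k^2*n"
       "\<forall>(A,B)\<in>Pairs n a. 40*n < card (E \<inter> cross A B)"
      unfolding S_def Good_def M_def by auto
    then have "Q ({..<n}, E)" unfolding Q_def using det[OF _ aa ka1] k by simp
    then show "E \<in> {E. E \<subseteq> S \<and> Q ({..<n}, E)}" using E by auto
  qed
  have finQ: "finite {E. E \<subseteq> S \<and> Q ({..<n}, E)}" using finS by simp
  have step1: "(\<Sum>E\<in>{E\<in>Pow S. Good E}. w E) \<le> gnp_prob n p Q"
    unfolding gnp_prob_def w_def[symmetric] S_def[symmetric]
    by (rule sum_mono2[OF finQ sub]) (use w0 in auto)
  have tot: "(\<Sum>E\<in>Pow S. w E) = 1"
    using gf[OF finS, of "{}" p 1] unfolding w_def by simp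
  have step3: "(\<Sum>E\<in>{E\<in>Pow S. Good E}. w E) = 1 - (\<Sum>E\<in>Pow S - {E\<in>Pow S. Good E}. w E)"
  proof -
    have "{E\<in>Pow S. Good E} \<subseteq> Pow S" by blast
    moreover have "finite (Pow S)" using finS by simp
    ultimately have "sum w (Pow S) = sum w (Pow S - {E\<in>Pow S. Good E}) + sum w {E\<in>Pow S. Good E}"
      by (rule sum.subset_diff)
    then show ?thesis using tot by linarith
  qed
  define T where "T = (\<lambda>E::nat set set. (2::real) ^ card E / 2 ^ M + (\<Sum>P\<in>Pairs n a. (1/2) ^ card (E \<inter> cross (fst P) (snd P)) * 2 ^ (40*n)))"
  have T0: "\<And>E. 0 \<le> (T E::real)" unfolding T_def by (intro add_nonneg_nonneg sum_nonneg) auto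
  have ind: "1 \<le> T E" if nG: "\<not> Good E" for E
  proof (cases "card E \<le> M")
    case False
    then have "(2::real)^M \<le> 2^card E" by (intro power_increasing) auto
    then have "1 \<le> (2::real) ^ card E / 2 ^ M" by simp
    moreover have "0 \<le> (\<Sum>P\<in>Pairs n a. (1/2::real) ^ card (E \<inter> cross (fst P) (snd P)) * 2 ^ (40*n))"
      by (intro sum_nonneg) auto
    ultimately show ?thesis unfolding T_def by linarith
  next
    case True
    then obtain A B where AB: "(A,B) \<in> Pairs n a" "card (E \<inter> cross A B) \<le> 40*n"
      using nG unfolding Good_def by auto
    have "(1::real) \<le> (1/2) ^ card (E \<inter> cross A B) * 2 ^ (40*n)"
    proof -
      have "(2::real) ^ card (E \<inter> cross A B) \<le> 2 ^ (40*n)" using AB by (intro power_increasing) auto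
      then show ?thesis by (simp add: power_one_over field_simps)
    qed
    also have "\<dots> \<le> (\<Sum>P\<in>Pairs n a. (1/2) ^ card (E \<inter> cross (fst P) (snd P)) * 2 ^ (40*n))"
      using member_le_sum[of "(A,B)" "Pairs n a" "\<lambda>P. (1/2::real) ^ card (E \<inter> cross (fst P) (snd P)) * 2 ^ (40*n)"]
        AB Pairs_fin by auto
    finally show ?thesis unfolding T_def by (simp add: add_increasing)
  qed
  have "(\<Sum>E\<in>Pow S - {E\<in>Pow S. Good E}. w E) \<le> (\<Sum>E\<in>Pow S - {E\<in>Pow S. Good E}. w E * T E)"
  proof (rule sum_mono)
    fix E assume "E \<in> Pow S - {E\<in>Pow S. Good E}"
    then have "1 \<le> T E" using ind by blast
    then have "w E * 1 \<le> w E * T E" using w0[of E] by (rule mult_left_mono)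
    then show "w E \<le> w E * T E" by simp
  qed
  also have "\<dots> \<le> (\<Sum>E\<in>Pow S. w E * T E)"
    using finS w0 T0 by (intro sum_mono2) auto
  also have "\<dots> = (\<Sum>E\<in>Pow S. w E * 2 ^ card E) / 2 ^ M
       + (\<Sum>P\<in>Pairs n a. (\<Sum>E\<in>Pow S. w E * (1/2) ^ card (E \<inter> cross (fst P) (snd P))) * 2 ^ (40*n))"
  proof -
    have "(\<Sum>E\<in>Pow S. w E * T E) = (\<Sum>E\<in>Pow S. w E * 2 ^ card E / 2 ^ M)
        + (\<Sum>E\<in>Pow S. \<Sum>P\<in>Pairs n a. w E * (1/2) ^ card (E \<inter> cross (fst P) (snd P)) * 2 ^ (40*n))"
      unfolding T_def
      by (simp add: sum.distrib distrib_left sum_distrib_left mult.assoc)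
    also have "\<dots> = (\<Sum>E\<in>Pow S. w E * 2 ^ card E) / 2 ^ M
       + (\<Sum>P\<in>Pairs n a. (\<Sum>E\<in>Pow S. w E * (1/2) ^ card (E \<inter> cross (fst P) (snd P))) * 2 ^ (40*n))"
      by (simp add: sum_divide_distrib sum.swap[of _ "Pow S"] sum_distrib_right)
    finally show ?thesis .
  qed
  also have "\<dots> = (p*2 + (1-p)) ^ card S / 2 ^ M
       + (\<Sum>P\<in>Pairs n a. (p*(1/2) + (1-p)) ^ (a*a) * 2 ^ (40*n))"
  proof -
    have "(\<Sum>E\<in>Pow S. w E * 2 ^ card E) = (\<Sum>E\<in>Pow S. w E * 2 ^ card (E \<inter> S))"
    proof (rule sum.cong[OF HOL.refl])
      fix E assume "E \<in> Pow S"
      then have "E \<inter> S = E" by blast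
      then show "w E * 2 ^ card E = w E * 2 ^ card (E \<inter> S)" by simp
    qed
    also have "\<dots> = (p*2 + (1-p)) ^ card S"
      using gf[OF finS, of S p 2] unfolding w_def by simp
    finally have "(\<Sum>E\<in>Pow S. w E * 2 ^ card E) = (p*2 + (1-p)) ^ card S" .
    moreover have "(\<Sum>E\<in>Pow S. w E * (1/2) ^ card (E \<inter> cross (fst P) (snd P))) = (p*(1/2) + (1-p)) ^ (a*a)"
      if P: "P \<in> Pairs n a" for P
    proof -
      obtain A B where AB: "P = (A,B)" by fastforce
      have A: "A \<subseteq> {..<n}" "B \<subseteq> {..<n}" "A \<inter> B = {}" "card A = a" "card B = a"
        using P AB unfolding Pairs_def by auto
      have cX: "card (cross A B) = a*a" using cross_card[of A B] A finite_subset by fastforce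
      have XS: "cross A B \<subseteq> S" unfolding S_def using cross_sub A by blast
      show ?thesis using gf[OF finS XS, of p "1/2"] cX AB unfolding w_def by simp
    qed
    ultimately show ?thesis by (simp cong: sum.cong)
  qed
  also have "\<dots> \<le> exp (-2 * real n) + 4^n * ((p*(1/2) + (1-p)) ^ (a*a) * 2 ^ (40*n))"
  proof (rule add_mono)
    have cS: "card S \<le> n^2" unfolding S_def by (rule all_edges_card)
    show "(p*2 + (1-p)) ^ card S / 2 ^ M \<le> exp (-2 * real n)"
      unfolding M_def using term1[OF k n1 p_def cS] .
    have "(\<Sum>P\<in>Pairs n a. (p*(1/2) + (1-p)) ^ (a*a) * 2 ^ (40*n))
        = real (card (Pairs n a)) * ((p*(1/2) + (1-p)) ^ (a*a) * 2 ^ (40*n))" by simp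
    also have "\<dots> \<le> 4^n * ((p*(1/2) + (1-p)) ^ (a*a) * 2 ^ (40*n))"
    proof (rule mult_right_mono)
      show "real (card (Pairs n a)) \<le> 4^n" using Pairs_card[of n a]
        by (metis of_nat_le_iff of_nat_numeral of_nat_power)
      show "0 \<le> (p*(1/2) + (1-p)) ^ (a*a) * 2 ^ (40*n)" using p1 p0 by simp
    qed
    finally show "(\<Sum>P\<in>Pairs n a. (p*(1/2) + (1-p)) ^ (a*a) * 2 ^ (40*n))
        \<le> 4^n * ((p*(1/2) + (1-p)) ^ (a*a) * 2 ^ (40*n))" .
  qed
  also have "\<dots> \<le> exp (-2 * real n) + exp (-2 * real n)"
    using term2[OF n1 p_def p1 ka2] by simp
  also have "\<dots> \<le> 2 powr (- 1 * real n)"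
  proof -
    have "2 \<le> exp (real n)" using exp_ge_add_one_self[of "real n"] n1 by linarith
    then have "2 * exp (-2 * real n) \<le> exp (real n) * exp (-2 * real n)" by (intro mult_right_mono) auto
    also have "\<dots> = exp (- real n)" by (simp add: exp_add[symmetric])
    also have "\<dots> \<le> exp (- real n * ln 2)"
    proof -
      have "ln (2::real) \<le> 1" using ln_le_minus_one[of 2] by simp
      then have "real n * ln 2 \<le> real n * 1" by (intro mult_left_mono) auto
      then have "- real n \<le> - real n * ln 2" by linarith
      then show ?thesis by simp
    qed
    also have "\<dots> = 2 powr (- 1 * real n)" by (simp add: powr_def)
    finally show ?thesis by simp
  qed
  finally have bad: "(\<Sum>E\<in>Pow S - {E\<in>Pow S. Good E}. w E) \<le> 2 powr (- 1 * real n)" .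
  show ?thesis using step1 step3 bad unfolding p_def[symmetric] Q_def[symmetric] by linarith
qed


theorem mainTheorem3:
  fixes k :: nat
  assumes "k \<ge> 3"
  shows "\<exists>c > 0. \<exists>N. \<forall>n \<ge> N.
           gnp_prob n (1000 * real k ^ 2 / real n)
             (\<lambda>G. real (card (snd G)) \<le> 2000 * real k ^ 2 * real n \<and>
                  far_from_K_minor_free (1 / (50 * real k ^ 2)) k G)
           \<ge> 1 - 2 powr (- c * real n)"
proof -
  have "\<forall>n \<ge> 1000*k^2 + (k+2)^2 + 1.
           gnp_prob n (1000 * real k ^ 2 / real n)
             (\<lambda>G. real (card (snd G)) \<le> 2000 * real k ^ 2 * real n \<and>
                  far_from_K_minor_free (1 / (50 * real k ^ 2)) k G)
           \<ge> 1 - 2 powr (- 1 * real n)"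
    using main_n[OF assms] by blast
  then show ?thesis by (intro exI[of _ "1::real"] conjI) auto
qed

end
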